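(* Let $X$ be a set and $\sqsubseteq$ a binary relation on pairs of finite subsets of $X$ satisfying: ($\iota_0$) $\emptyset\not\sqsubseteq\emptyset$; ($\iota_1$) $a\sqsubseteq b$, $a\subseteq a'$, $b\subseteq b'$ imply $a'\sqsubseteq b'$; ($\iota_2$) $\{p\}\sqsubseteq\{q\}$ and $\{q\}\sqsubseteq\{p\}$ hold iff $p=q$; ($\iota_3$) $(a_0\cup\{p\})\sqsubseteq b_0$ and $a_1\sqsubseteq(b_1\cup\{p\})$ imply $(a_0\cup a_1)\sqsubseteq(b_0\cup b_1)$. Regard $\mathbf{X}=(X,\sqsubseteq)$ as a structure in the language $\{I_{n,m}\}_{n,m\in\mathbb N}$ by letting $I_{n,m}(s_0,\dots,s_{n-1},t_0,\dots,t_{m-1})$ hold iff $\{s_0,\dots,s_{n-1}\}\sqsubseteq\{t_0,\dots,t_{m-1}\}$. Then $\mathbf{X}$ is $\mathbf{I}$-separated.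
   Context: $\mathbf{I}$ is the structure with universe $\{0,1\}$ and, for all $n,m\in\mathbb N$ (including $0$), an $(n+m)$-ary relation $I_{n,m}$ given by $I_{n,m}(a_0,\dots,a_{n-1},b_0,\dots,b_{m-1})\iff \min_{i<n}a_i\le\max_{j<m}b_j$, with $\min\emptyset=1$, $\max\emptyset=0$. A structure is $\mathbf{I}$-separated if it embeds (injective homomorphism preserving and reflecting all relations) into some power of $\mathbf{I}$. *)

theory Defs
  imports Main
begin

text \<open>The structure I: universe {0,1}, rendered as bool with False = 0 < True = 1.
  A pair of lists (as, bs) with length as = n, length bs = m represents a tuple for I_{n,m}.
  min over empty = 1 and max over empty = 0, so I_{n,m}(a,b) holds iff
  (all a_i = 1) implies (some b_j = 1).\<close>
definition I_rel :: "bool list \<Rightarrow> bool list \<Rightarrow> bool" where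
  "I_rel as bs \<longleftrightarrow> ((\<forall>a\<in>set as. a) \<longrightarrow> (\<exists>b\<in>set bs. b))"

text \<open>A structure in the language {I_{n,m}} with universe X is given by a predicate
  rel on pairs of lists over X (the arities n, m are the lengths of the lists).\<close>
definition embeds_in_I_power ::
  "'a set \<Rightarrow> ('a list \<Rightarrow> 'a list \<Rightarrow> bool) \<Rightarrow> 'k set \<Rightarrow> ('a \<Rightarrow> 'k \<Rightarrow> bool) \<Rightarrow> bool" where
  "embeds_in_I_power X rel K e \<longleftrightarrow>
     (\<forall>x\<in>X. \<forall>y\<in>X. (\<forall>k\<in>K. e x k = e y k) \<longrightarrow> x = y) \<and>
     (\<forall>s t. set s \<subseteq> X \<longrightarrow> set t \<subseteq> X \<longrightarrow>
        (rel s t \<longleftrightarrow> (\<forall>k\<in>K. I_rel (map (\<lambda>x. e x k) s) (map (\<lambda>x. e x k) t))))"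

text \<open>Every coordinate of such an embedding
  is a map X \<rightarrow> {0,1}, i.e. determined by a subset of X, so without loss of generality the
  index set can be taken to be a set of subsets of X (type 'a set).\<close>
definition I_separated :: "'a set \<Rightarrow> ('a list \<Rightarrow> 'a list \<Rightarrow> bool) \<Rightarrow> bool" where
  "I_separated X rel \<longleftrightarrow> (\<exists>(K::'a set set) e. embeds_in_I_power X rel K e)"

end

theory Submission
  imports Defs
begin

lemma separation:
  fixes X :: "'a set" and R :: "'a set \<Rightarrow> 'a set \<Rightarrow> bool"
  assumes iota1: "\<And>a b a' b'. finite a' \<Longrightarrow> finite b' \<Longrightarrow> a' \<subseteq> X \<Longrightarrow> b' \<subseteq> X \<Longrightarrow>
                  R a b \<Longrightarrow> a \<subseteq> a' \<Longrightarrow> b \<subseteq> b' \<Longrightarrow> R a' b'"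
    and iota2: "\<And>p q. p \<in> X \<Longrightarrow> q \<in> X \<Longrightarrow> (R {p} {q} \<and> R {q} {p} \<longleftrightarrow> p = q)"
    and iota3: "\<And>a0 b0 a1 b1 p. finite a0 \<Longrightarrow> finite b0 \<Longrightarrow> finite a1 \<Longrightarrow> finite b1 \<Longrightarrow>
                  a0 \<subseteq> X \<Longrightarrow> b0 \<subseteq> X \<Longrightarrow> a1 \<subseteq> X \<Longrightarrow> b1 \<subseteq> X \<Longrightarrow> p \<in> X \<Longrightarrow>
                  R (a0 \<union> {p}) b0 \<Longrightarrow> R a1 (b1 \<union> {p}) \<Longrightarrow> R (a0 \<union> a1) (b0 \<union> b1)"
    and fa: "finite a" and fb: "finite b" and aX: "a \<subseteq> X" and bX: "b \<subseteq> X" and nR: "\<not> R a b"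
  shows "\<exists>k. a \<subseteq> k \<and> b \<inter> k = {} \<and>
     (\<forall>c d. finite c \<and> finite d \<and> c \<subseteq> X \<and> d \<subseteq> X \<and> c \<subseteq> k \<and> R c d \<longrightarrow> d \<inter> k \<noteq> {})"
proof -
  define L where "L S = {x. Inl x \<in> S}" for S :: "('a + 'a) set"
  define Rr where "Rr S = {x. Inr x \<in> S}" for S :: "('a + 'a) set"
  define cons where "cons S \<longleftrightarrow> S \<subseteq> Inl ` X \<union> Inr ` X \<and>
     (\<forall>c d. finite c \<longrightarrow> finite d \<longrightarrow> c \<subseteq> L S \<longrightarrow> d \<subseteq> Rr S \<longrightarrow> \<not> R c d)" for S
  define A where "A = {S. Inl ` a \<union> Inr ` b \<subseteq> S \<and> cons S}"
  have LX: "L S \<subseteq> X" if "cons S" for S using that unfolding cons_def L_def by auto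
  have RX: "Rr S \<subseteq> X" if "cons S" for S using that unfolding cons_def Rr_def by auto
  have "Inl ` a \<union> Inr ` b \<in> A"
  proof -
    have "cons (Inl ` a \<union> Inr ` b)"
      unfolding cons_def
    proof (intro conjI allI impI)
      show "Inl ` a \<union> Inr ` b \<subseteq> Inl ` X \<union> Inr ` X" using aX bX by auto
    next
      fix c d assume "finite c" "finite d" "c \<subseteq> L (Inl ` a \<union> Inr ` b)" "d \<subseteq> Rr (Inl ` a \<union> Inr ` b)"
      then have "c \<subseteq> a" "d \<subseteq> b" unfolding L_def Rr_def by auto
      then show "\<not> R c d" using iota1[OF fa fb aX bX _] nR by blast
    qed
    then show ?thesis unfolding A_def by auto
  qed
  then have Ane: "A \<noteq> {}" by auto
  have ch: "\<Union>C \<in> A" if chC: "C \<noteq> {}" "subset.chain A C" for C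
  proof -
    have CA: "C \<subseteq> A" using that(2) by (simp add: subset.chain_def)
    have "cons (\<Union>C)" unfolding cons_def
    proof (intro conjI allI impI)
      show "\<Union>C \<subseteq> Inl ` X \<union> Inr ` X" using CA unfolding A_def cons_def by auto
    next
      fix c d assume h: "finite c" "finite d" "c \<subseteq> L (\<Union>C)" "d \<subseteq> Rr (\<Union>C)"
      have f1: "finite (Inl ` c \<union> Inr ` d)" using h by auto
      have f2: "Inl ` c \<union> Inr ` d \<subseteq> \<Union>C" using h(3,4) unfolding L_def Rr_def by auto
      obtain B where B: "B \<in> C" "Inl ` c \<union> Inr ` d \<subseteq> B"
        using finite_subset_Union_chain[OF f1 f2 chC(1) chC(2)] by blast
      then have "cons B" using CA unfolding A_def by auto
      moreover have "c \<subseteq> L B" "d \<subseteq> Rr B" using B unfolding L_def Rr_def by auto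
      ultimately show "\<not> R c d" using h unfolding cons_def by blast
    qed
    moreover have "Inl ` a \<union> Inr ` b \<subseteq> \<Union>C" using chC(1) CA unfolding A_def by blast
    ultimately show ?thesis unfolding A_def by auto
  qed
  obtain M where M: "M \<in> A" and max: "\<And>S. S \<in> A \<Longrightarrow> M \<subseteq> S \<Longrightarrow> S = M"
    using subset_Zorn_nonempty[OF Ane ch] by blast
  have cM: "cons M" using M unfolding A_def by auto
  have Lins: "L (insert (Inl p) S) = insert p (L S)" "Rr (insert (Inl p) S) = Rr S"
     "L (insert (Inr p) S) = L S" "Rr (insert (Inr p) S) = insert p (Rr S)" for p S
    unfolding L_def Rr_def by auto
  have cover: "p \<in> L M \<or> p \<in> Rr M" if pX: "p \<in> X" for p
  proof (rule ccontr)
    assume np: "\<not> (p \<in> L M \<or> p \<in> Rr M)"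
    have "insert (Inl p) M \<notin> A"
    proof
      assume "insert (Inl p) M \<in> A"
      then have "insert (Inl p) M = M" using max by blast
      then show False using np unfolding L_def by auto
    qed
    then have "\<not> cons (insert (Inl p) M)" using M unfolding A_def by auto
    then obtain c d where cd: "finite c" "finite d" "c \<subseteq> insert p (L M)" "d \<subseteq> Rr M" "R c d"
      using cM pX unfolding cons_def Lins by auto
    have "insert (Inr p) M \<notin> A"
    proof
      assume "insert (Inr p) M \<in> A"
      then have "insert (Inr p) M = M" using max by blast
      then show False using np unfolding Rr_def by auto
    qed
    then have "\<not> cons (insert (Inr p) M)" using M unfolding A_def by auto
    then obtain c' d' where cd': "finite c'" "finite d'" "c' \<subseteq> L M" "d' \<subseteq> insert p (Rr M)" "R c' d'"
      using cM pX unfolding cons_def Lins by auto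
    have LMX: "L M \<subseteq> X" and RMX: "Rr M \<subseteq> X" using LX RX cM by auto
    have r1: "R ((c - {p}) \<union> {p}) d"
      by (rule iota1[OF _ cd(2) _ _ cd(5)]) (use cd LMX RMX pX in auto)
    have r2: "R c' ((d' - {p}) \<union> {p})"
      by (rule iota1[OF cd'(1) _ _ _ cd'(5)]) (use cd' LMX RMX pX in auto)
    have "R ((c - {p}) \<union> c') (d \<union> (d' - {p}))"
      by (rule iota3[OF _ _ _ _ _ _ _ _ pX r1 r2]) (use cd cd' LMX RMX in auto)
    moreover have "(c - {p}) \<union> c' \<subseteq> L M" "d \<union> (d' - {p}) \<subseteq> Rr M" using cd cd' by auto
    ultimately show False using cM cd cd' unfolding cons_def by auto
  qed
  show ?thesis
  proof (intro exI[of _ "L M"] conjI allI impI)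
    show "a \<subseteq> L M" using M unfolding A_def L_def by auto
  next
    show "b \<inter> L M = {}"
    proof (rule ccontr)
      assume "b \<inter> L M \<noteq> {}"
      then obtain p where p: "p \<in> L M" "p \<in> b" by auto
      then have "p \<in> Rr M" using M unfolding A_def Rr_def by auto
      moreover have "R {p} {p}" using iota2[of p p] p bX by auto
      ultimately show False using cM p unfolding cons_def by auto
    qed
  next
    fix c d assume h: "finite c \<and> finite d \<and> c \<subseteq> X \<and> d \<subseteq> X \<and> c \<subseteq> L M \<and> R c d"
    show "d \<inter> L M \<noteq> {}"
    proof
      assume "d \<inter> L M = {}"
      then have "d \<subseteq> Rr M" using cover h by blast
      then show False using cM h unfolding cons_def by blast
    qed
  qed
qed

theorem mainTheorem7:
  fixes X :: "'a set" and R :: "'a set \<Rightarrow> 'a set \<Rightarrow> bool"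
  assumes iota0: "\<not> R {} {}"
    and iota1: "\<And>a b a' b'. finite a' \<Longrightarrow> finite b' \<Longrightarrow> a' \<subseteq> X \<Longrightarrow> b' \<subseteq> X \<Longrightarrow>
                  R a b \<Longrightarrow> a \<subseteq> a' \<Longrightarrow> b \<subseteq> b' \<Longrightarrow> R a' b'"
    and iota2: "\<And>p q. p \<in> X \<Longrightarrow> q \<in> X \<Longrightarrow> (R {p} {q} \<and> R {q} {p} \<longleftrightarrow> p = q)"
    and iota3: "\<And>a0 b0 a1 b1 p. finite a0 \<Longrightarrow> finite b0 \<Longrightarrow> finite a1 \<Longrightarrow> finite b1 \<Longrightarrow>
                  a0 \<subseteq> X \<Longrightarrow> b0 \<subseteq> X \<Longrightarrow> a1 \<subseteq> X \<Longrightarrow> b1 \<subseteq> X \<Longrightarrow> p \<in> X \<Longrightarrow>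
                  R (a0 \<union> {p}) b0 \<Longrightarrow> R a1 (b1 \<union> {p}) \<Longrightarrow> R (a0 \<union> a1) (b0 \<union> b1)"
  shows "I_separated X (\<lambda>s t. R (set s) (set t))"
proof -
  define K where "K = {k. \<forall>c d. finite c \<and> finite d \<and> c \<subseteq> X \<and> d \<subseteq> X \<and> c \<subseteq> k \<and> R c d \<longrightarrow> d \<inter> k \<noteq> {}}"
  have sep: "\<exists>k. a \<subseteq> k \<and> b \<inter> k = {} \<and>
     (\<forall>c d. finite c \<and> finite d \<and> c \<subseteq> X \<and> d \<subseteq> X \<and> c \<subseteq> k \<and> R c d \<longrightarrow> d \<inter> k \<noteq> {})"
    if "finite a" "finite b" "a \<subseteq> X" "b \<subseteq> X" "\<not> R a b" for a b
    apply (rule separation[of X R])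
    using iota1 apply blast
    using iota2 apply blast
    using iota3 apply blast
    using that by auto
  have Irel: "I_rel (map (\<lambda>x. x \<in> k) s) (map (\<lambda>x. x \<in> k) t) \<longleftrightarrow> (set s \<subseteq> k \<longrightarrow> set t \<inter> k \<noteq> {})"
    for k s t unfolding I_rel_def by auto
  have "embeds_in_I_power X (\<lambda>s t. R (set s) (set t)) K (\<lambda>x k. x \<in> k)"
    unfolding embeds_in_I_power_def
  proof (intro conjI ballI allI impI)
    fix x y assume xy: "x \<in> X" "y \<in> X" "\<forall>k\<in>K. (x \<in> k) = (y \<in> k)"
    show "x = y"
    proof (rule ccontr)
      assume "x \<noteq> y"
      then have "\<not> R {x} {y} \<or> \<not> R {y} {x}" using iota2 xy by blast
      then show False
      proof
        assume "\<not> R {x} {y}"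
        from sep[OF _ _ _ _ this] xy obtain k where "{x} \<subseteq> k" "{y} \<inter> k = {}" "k \<in> K"
          unfolding K_def by auto
        then show False using xy by auto
      next
        assume "\<not> R {y} {x}"
        from sep[OF _ _ _ _ this] xy obtain k where "{y} \<subseteq> k" "{x} \<inter> k = {}" "k \<in> K"
          unfolding K_def by auto
        then show False using xy by auto
      qed
    qed
  next
    fix s t :: "'a list" assume st: "set s \<subseteq> X" "set t \<subseteq> X"
    show "R (set s) (set t) = (\<forall>k\<in>K. I_rel (map (\<lambda>x. x \<in> k) s) (map (\<lambda>x. x \<in> k) t))"
    proof
      assume "R (set s) (set t)"
      then show "\<forall>k\<in>K. I_rel (map (\<lambda>x. x \<in> k) s) (map (\<lambda>x. x \<in> k) t)"
        unfolding Irel K_def using st by blast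
    next
      assume all: "\<forall>k\<in>K. I_rel (map (\<lambda>x. x \<in> k) s) (map (\<lambda>x. x \<in> k) t)"
      show "R (set s) (set t)"
      proof (rule ccontr)
        assume "\<not> R (set s) (set t)"
        from sep[OF _ _ _ _ this] st obtain k where "set s \<subseteq> k" "set t \<inter> k = {}" "k \<in> K"
          unfolding K_def by auto
        then show False using all unfolding Irel by blast
      qed
    qed
  qed
  then show ?thesis unfolding I_separated_def by blast
qed

end
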